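(* Let $\mathscr{C}=\left\{\sum_{i=1}^{\infty} t_i 3^{-i} : t_i\in\{0,2\}\right\}$ be the middle-third Cantor set and $\mathscr{C}^{(2)}=\{x^2 : x\in\mathscr{C}\}$. For every integer $k\geq 2$, the interval \[\left[\tfrac{36}{81}+\tfrac{8}{9}\cdot\tfrac{1}{3^{2k}}+\tfrac{1}{3^{2k}},\ \tfrac{36}{81}+\tfrac{4}{3^{2k+1}}+\tfrac{1}{3^{4k}}+\tfrac{2}{3^{2k}}+\tfrac{4}{9}\cdot\tfrac{1}{3^{2k}}\right]\] is contained in $\mathscr{C}^{(2)}+\mathscr{C}^{(2)}+\mathscr{C}^{(2)}+\mathscr{C}^{(2)}=\{y_1+y_2+y_3+y_4 : y_j\in\mathscr{C}^{(2)}\}$. *)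

theory Defs
  imports Complex_Main
begin

definition cantor_set :: "real set" where
  "cantor_set = {x. \<exists>t::nat \<Rightarrow> real. (\<forall>i. t i \<in> {0, 2}) \<and>
                      x = (\<Sum>i. t (Suc i) / 3 ^ (Suc i))}"

definition cantor_sq :: "real set" where
  "cantor_sq = {x ^ 2 | x. x \<in> cantor_set}"

end

theory Submission imports Defs begin

type_synonym st = "(nat \<Rightarrow> nat \<Rightarrow> real) \<times> (nat \<Rightarrow> nat)"

definition aa :: "st \<Rightarrow> nat \<Rightarrow> real" where "aa s j = (\<Sum>i<snd s j. fst s j i / 3^(Suc i))"
definition hh :: "st \<Rightarrow> nat \<Rightarrow> real" where "hh s j = 1 / 3^(snd s j)"
definition ww :: "st \<Rightarrow> nat \<Rightarrow> real" where "ww s j = (2 * aa s j + hh s j) * hh s j"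
definition loB :: "st \<Rightarrow> real" where "loB s = (\<Sum>j<4. (aa s j)^2)"
definition upB :: "st \<Rightarrow> real" where "upB s = (\<Sum>j<4. (aa s j + hh s j)^2)"
definition sw :: "st \<Rightarrow> real" where "sw s = (\<Sum>j<4. ww s j)"
definition amax :: "st \<Rightarrow> nat" where "amax s = (SOME i. i < 4 \<and> (\<forall>j<4. ww s j \<le> ww s i))"
definition spl :: "st \<Rightarrow> nat \<Rightarrow> real \<Rightarrow> st" where
  "spl s i c = ((fst s)(i := (fst s i)(snd s i := c)), (snd s)(i := Suc (snd s i)))"
definition step :: "real \<Rightarrow> st \<Rightarrow> st" where
  "step y s = (if y \<le> upB (spl s (amax s) 0) then spl s (amax s) 0 else spl s (amax s) 2)"

lemma amax: "amax s < 4 \<and> (\<forall>j<4. ww s j \<le> ww s (amax s))"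
proof -
  have "\<exists>i. i < 4 \<and> (\<forall>j<4. ww s j \<le> ww s i)"
  proof -
    let ?M = "Max (ww s ` {..<4})"
    have ne: "ww s ` {..<4} \<noteq> {}" by (metis empty_iff image_is_empty lessThan_iff zero_less_numeral)
    have "?M \<in> ww s ` {..<4}" by (rule Max_in) (simp, rule ne)
    then obtain i where "i<4" "?M = ww s i" by auto
    moreover have "\<forall>j<4. ww s j \<le> ?M" by (auto intro: Max_ge)
    ultimately show ?thesis by auto
  qed
  then show ?thesis unfolding amax_def by (rule someI_ex)
qed

lemma spl_aa: "aa (spl s i c) j = (if j = i then aa s i + c * hh s i / 3 else aa s j)"
  unfolding aa_def hh_def spl_def by (auto simp: sum.lessThan_Suc intro!: sum.cong)

lemma spl_hh: "hh (spl s i c) j = (if j = i then hh s i / 3 else hh s j)"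
  unfolding hh_def spl_def by auto

lemma ineq1: "0 \<le> a \<Longrightarrow> 0 < (h::real) \<Longrightarrow> (c = 0 \<or> c = 2) \<Longrightarrow> (2*a+h)*h/9 \<le> (2*a + 2*c*h/3 + h/3)*(h/3)"
proof -
  assume a: "0 \<le> a" and h: "0 < h" and c: "c = 0 \<or> c = 2"
  have "0 \<le> a * h" using a h by simp
  with c show ?thesis by (auto simp: algebra_simps)
qed
lemma ineq2: "0 \<le> a \<Longrightarrow> 0 < (h::real) \<Longrightarrow> (c = 0 \<or> c = 2) \<Longrightarrow> (2*a + 2*c*h/3 + h/3)*(h/3) \<le> 5/9*((2*a+h)*h)"
proof -
  assume a: "0 \<le> a" and h: "0 < h" and c: "c = 0 \<or> c = 2"
  have p: "0 \<le> a * h" "0 \<le> h * h" using a h by simp_all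
  have e: "5/9*((2*a+h)*h) - (2*a + 2*c*h/3 + h/3)*(h/3) = (if c = 0 then 4/9*(a*h) + 4/9*(h*h) else 4/9*(a*h))"
    using c by (auto simp: algebra_simps)
  have "0 \<le> 5/9*((2*a+h)*h) - (2*a + 2*c*h/3 + h/3)*(h/3)" unfolding e using p by auto
  then show ?thesis by simp
qed

lemma hh_pos: "hh s j > 0" unfolding hh_def by simp

lemma step_lemma:
  fixes s :: st and c :: real
  assumes nn: "\<forall>j<4. 0 \<le> aa s j" and bal: "\<forall>j<4. \<forall>l<4. ww s j \<le> 9 * ww s l"
    and c: "c = 0 \<or> c = 2"
  defines "i \<equiv> amax s"
  shows "(\<forall>j<4. 0 \<le> aa (spl s i c) j) \<and> (\<forall>j<4. \<forall>l<4. ww (spl s i c) j \<le> 9 * ww (spl s i c) l)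
     \<and> sw (spl s i c) \<le> 8/9 * sw s"
proof -
  define s' where "s' = spl s i c"
  have i4: "i < 4" and imax: "\<forall>j<4. ww s j \<le> ww s i" using amax i_def by blast+
  have a': "\<And>j. aa s' j = (if j = i then aa s i + c * hh s i / 3 else aa s j)"
    unfolding s'_def by (rule spl_aa)
  have h': "\<And>j. hh s' j = (if j = i then hh s i / 3 else hh s j)"
    unfolding s'_def by (rule spl_hh)
  have w'j: "\<And>j. j \<noteq> i \<Longrightarrow> ww s' j = ww s j" unfolding ww_def using a' h' by simp
  have w'i: "ww s' i = (2*aa s i + 2*c*hh s i/3 + hh s i/3) * (hh s i/3)"
    unfolding ww_def using a' h' by (simp add: algebra_simps)
  have hp: "hh s i > 0" by (rule hh_pos)
  have ai: "aa s i \<ge> 0" using nn i4 by auto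
  have ah: "aa s i * hh s i \<ge> 0" using hp ai by simp
  have lowi: "ww s i / 9 \<le> ww s' i"
    using ineq1[OF ai hp c] unfolding w'i unfolding ww_def .
  have upi: "ww s' i \<le> 5/9 * ww s i"
    using ineq2[OF ai hp c] unfolding w'i unfolding ww_def .
  have wi0: "ww s i \<ge> 0" unfolding ww_def using ai hp by (intro mult_nonneg_nonneg) auto
  have P1: "\<forall>j<4. 0 \<le> aa s' j" using nn a' c hp by auto
  have P2: "\<forall>j<4. \<forall>l<4. ww s' j \<le> 9 * ww s' l"
  proof (intro allI impI)
    fix j l :: nat assume j: "j < 4" and l: "l < 4"
    show "ww s' j \<le> 9 * ww s' l"
    proof (cases "j = i")
      case True
      then show ?thesis
      proof (cases "l = i")
        case True then show ?thesis using \<open>j = i\<close> lowi wi0 by auto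
      next
        case False then show ?thesis using \<open>j = i\<close> upi wi0 bal l i4 w'j by fastforce
      qed
    next
      case False
      then show ?thesis
      proof (cases "l = i")
        case True then show ?thesis using \<open>j \<noteq> i\<close> lowi imax j w'j by fastforce
      next
        case False then show ?thesis using \<open>j \<noteq> i\<close> bal j l w'j by auto
      qed
    qed
  qed
  have A: "sw s = ww s i + (\<Sum>j\<in>{..<4}-{i}. ww s j)"
    unfolding sw_def using i4 by (subst sum.remove[of _ i]) auto
  have B: "sw s' = ww s' i + (\<Sum>j\<in>{..<4}-{i}. ww s j)"
    unfolding sw_def using i4 w'j by (subst sum.remove[of _ i]) (auto intro!: sum.cong)
  have C: "sw s \<le> 4 * ww s i"
  proof -
    have "sw s \<le> (\<Sum>j<(4::nat). ww s i)" unfolding sw_def using imax by (intro sum_mono) auto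
    then show ?thesis by simp
  qed
  have P3: "sw s' \<le> 8/9 * sw s" using A B C upi by linarith
  show ?thesis using P1 P2 P3 unfolding s'_def by blast
qed

lemma step_bounds:
  fixes s :: st
  assumes nn: "\<forall>j<4. 0 \<le> aa s j" and bal: "\<forall>j<4. \<forall>l<4. ww s j \<le> 9 * ww s l"
    and lo: "loB s \<le> y" and up: "y \<le> upB s"
  shows "loB (step y s) \<le> y \<and> y \<le> upB (step y s)"
proof -
  define i where "i = amax s"
  have i4: "i < 4" using amax i_def by blast
  define sL where "sL = spl s i 0"
  define sR where "sR = spl s i 2"
  have aL: "\<And>j. aa sL j = aa s j" unfolding sL_def by (simp add: spl_aa)
  have hL: "\<And>j. hh sL j = (if j = i then hh s i / 3 else hh s j)" unfolding sL_def by (rule spl_hh)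
  have aR: "\<And>j. aa sR j = (if j = i then aa s i + 2 * hh s i / 3 else aa s j)" unfolding sR_def by (simp add: spl_aa)
  have hR: "\<And>j. hh sR j = (if j = i then hh s i / 3 else hh s j)" unfolding sR_def by (rule spl_hh)
  have loL: "loB sL = loB s" unfolding loB_def using aL by simp
  have upR: "upB sR = upB s" unfolding upB_def using aR hR by (intro sum.cong) (auto simp: algebra_simps)
  have cov: "loB sR \<le> upB sL"
  proof -
    have "upB sL - loB sR = (\<Sum>j<4. (aa sL j + hh sL j)^2 - (aa sR j)^2)"
      unfolding upB_def loB_def by (simp add: sum_subtractf)
    also have "\<dots> = ((aa sL i + hh sL i)^2 - (aa sR i)^2) + (\<Sum>j\<in>{..<4}-{i}. (aa sL j + hh sL j)^2 - (aa sR j)^2)"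
      using i4 by (subst sum.remove[of _ i]) auto
    also have "(\<Sum>j\<in>{..<4}-{i}. (aa sL j + hh sL j)^2 - (aa sR j)^2) = (\<Sum>j\<in>{..<4}-{i}. ww s j)"
      using aL hL aR hR by (intro sum.cong) (auto simp: ww_def power2_eq_square algebra_simps)
    also have "(aa sL i + hh sL i)^2 - (aa sR i)^2 = - ww s i / 3"
      using aL hL aR hR by (auto simp: ww_def power2_eq_square algebra_simps)
    finally have e: "upB sL - loB sR = - ww s i / 3 + (\<Sum>j\<in>{..<4}-{i}. ww s j)" .
    have "of_nat (card ({..<4::nat}-{i})) * (ww s i / 9) \<le> (\<Sum>j\<in>{..<4}-{i}. ww s j)"
      using bal i4 by (intro sum_bounded_below) fastforce
    moreover have "card ({..<4::nat}-{i}) = 3" using i4 by simp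
    ultimately show ?thesis using e by simp
  qed
  show ?thesis
  proof (cases "y \<le> upB sL")
    case True
    then have "step y s = sL" unfolding step_def sL_def i_def by simp
    then show ?thesis using True loL lo by simp
  next
    case False
    then have "step y s = sR" unfolding step_def sL_def sR_def i_def by simp
    then show ?thesis using False upR up cov by simp
  qed
qed

definition SS :: "real \<Rightarrow> nat \<Rightarrow> st" where "SS y n = (step y ^^ n) (\<lambda>j i. 0, \<lambda>j. 0)"

lemma SS_Suc: "SS y (Suc n) = step y (SS y n)" unfolding SS_def by simp

lemma step_cases: "step y s = spl s (amax s) 0 \<or> step y s = spl s (amax s) 2"
  unfolding step_def by auto

lemma SS_inv:
  assumes "0 \<le> y" "y \<le> 4"
  shows "(\<forall>j<4. 0 \<le> aa (SS y n) j) \<and> (\<forall>j<4. \<forall>l<4. ww (SS y n) j \<le> 9 * ww (SS y n) l)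
    \<and> loB (SS y n) \<le> y \<and> y \<le> upB (SS y n) \<and> (\<forall>j i. fst (SS y n) j i \<in> {0,2})
    \<and> sw (SS y n) \<le> 4 * (8/9)^n"
proof (induction n)
  case 0
  have a: "aa (SS y 0) j = 0" and h: "hh (SS y 0) j = 1" for j
    unfolding SS_def aa_def hh_def by simp_all
  show ?case using assms by (simp add: a h ww_def loB_def upB_def sw_def) (simp add: SS_def)
next
  case (Suc n)
  let ?s = "SS y n"
  have nn: "\<forall>j<4. 0 \<le> aa ?s j" and bal: "\<forall>j<4. \<forall>l<4. ww ?s j \<le> 9 * ww ?s l"
    and lo: "loB ?s \<le> y" and up: "y \<le> upB ?s" and dg: "\<forall>j i. fst ?s j i \<in> {0,2}"
    and sw: "sw ?s \<le> 4 * (8/9)^n" using Suc.IH by blast+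
  obtain c where c: "c = 0 \<or> c = 2" and st: "step y ?s = spl ?s (amax ?s) c"
    using step_cases by blast
  have A: "(\<forall>j<4. 0 \<le> aa (step y ?s) j) \<and> (\<forall>j<4. \<forall>l<4. ww (step y ?s) j \<le> 9 * ww (step y ?s) l)
     \<and> sw (step y ?s) \<le> 8/9 * sw ?s" unfolding st by (rule step_lemma[OF nn bal c])
  have B: "loB (step y ?s) \<le> y \<and> y \<le> upB (step y ?s)" by (rule step_bounds[OF nn bal lo up])
  have D: "\<forall>j i. fst (step y ?s) j i \<in> {0,2}" unfolding st spl_def using dg c by auto
  have E: "sw (step y ?s) \<le> 4 * (8/9)^Suc n" using A sw by simp
  show ?case unfolding SS_Suc using A B D E by blast
qed

lemma step_mono: "snd s j \<le> snd (step y s) j"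
  using step_cases[of y s] unfolding spl_def by auto

lemma step_keep: "i < snd s j \<Longrightarrow> fst (step y s) j i = fst s j i"
  using step_cases[of y s] unfolding spl_def by auto

lemma SS_mono: "n \<le> n' \<Longrightarrow> snd (SS y n) j \<le> snd (SS y n') j"
  by (rule lift_Suc_mono_le[of "\<lambda>n. snd (SS y n) j"]) (auto simp: SS_Suc step_mono)

lemma SS_keep: "i < snd (SS y n) j \<Longrightarrow> fst (SS y (n + d)) j i = fst (SS y n) j i"
proof (induction d)
  case 0 then show ?case by simp
next
  case (Suc d)
  have "i < snd (SS y (n + d)) j" using Suc.prems SS_mono[of n "n+d" y j] by simp
  then show ?case using Suc by (simp add: SS_Suc step_keep)
qed

definition dg :: "real \<Rightarrow> nat \<Rightarrow> nat \<Rightarrow> real" where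
  "dg y j i = (if \<exists>n. i < snd (SS y n) j then fst (SS y (SOME n. i < snd (SS y n) j)) j i else 0)"

lemma dg_eq: assumes "i < snd (SS y n) j" shows "dg y j i = fst (SS y n) j i"
proof -
  have ex: "\<exists>n. i < snd (SS y n) j" using assms by blast
  define n0 where "n0 = (SOME n. i < snd (SS y n) j)"
  have n0: "i < snd (SS y n0) j" unfolding n0_def using someI_ex[OF ex] .
  have "dg y j i = fst (SS y n0) j i" unfolding dg_def n0_def using ex by simp
  also have "\<dots> = fst (SS y (n0 + n)) j i" using SS_keep[OF n0] by simp
  also have "\<dots> = fst (SS y n) j i" using SS_keep[OF assms, of n0] by (simp add: add.commute)
  finally show ?thesis .
qed

lemma dg_01: assumes "0 \<le> y" "y \<le> 4" shows "dg y j i \<in> {0,2}"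
proof (cases "\<exists>n. i < snd (SS y n) j")
  case True
  then obtain n where "i < snd (SS y n) j" by blast
  then show ?thesis using dg_eq SS_inv[OF assms, of n] by auto
next
  case False then show ?thesis unfolding dg_def by simp
qed

definition xx :: "real \<Rightarrow> nat \<Rightarrow> real" where "xx y j = (\<Sum>i. dg y j i / 3^(Suc i))"

lemma geo_tail: "(\<lambda>i. 2 / 3^(Suc (i + m)) :: real) sums (1 / 3^m)"
proof -
  have g: "(\<lambda>i. (1/3::real)^i) sums (1 / (1 - 1/3))" by (rule geometric_sums) simp
  have "(\<lambda>i. (2 / 3^(Suc m)) * (1/3::real)^i) sums ((2 / 3^(Suc m)) * (1 / (1 - 1/3)))"
    by (rule sums_mult[OF g])
  moreover have "(\<lambda>i. (2 / 3^(Suc m)) * (1/3::real)^i) = (\<lambda>i. 2 / 3^(Suc (i + m)))"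
    by (auto simp: power_add power_divide field_simps)
  moreover have "(2 / 3^(Suc m)) * (1 / (1 - 1/3)) = (1 / 3^m :: real)" by simp
  ultimately show ?thesis by simp
qed

lemma xx_bounds:
  assumes "0 \<le> y" "y \<le> 4"
  shows "aa (SS y n) j \<le> xx y j \<and> xx y j \<le> aa (SS y n) j + hh (SS y n) j"
proof -
  define f where "f i = dg y j i / 3^(Suc i)" for i
  define m where "m = snd (SS y n) j"
  have f0: "0 \<le> f i" and f2: "f i \<le> 2 / 3^(Suc i)" for i
    using dg_01[OF assms, of j i] unfolding f_def by auto
  have sg: "summable (\<lambda>i. 2 / 3^(Suc i) :: real)" using geo_tail[of 0] by (auto simp: sums_iff)
  have sf: "summable f" by (rule summable_comparison_test'[OF sg]) (use f0 f2 in auto)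
  have split: "suminf f = (\<Sum>i. f (i + m)) + sum f {..<m}" by (rule suminf_split_initial_segment[OF sf])
  have pre: "sum f {..<m} = aa (SS y n) j"
    unfolding aa_def f_def m_def by (intro sum.cong) (auto simp: dg_eq)
  have sft: "summable (\<lambda>i. f (i + m))" using sf by (rule summable_ignore_initial_segment)
  have t0: "0 \<le> (\<Sum>i. f (i + m))" using f0 sft by (intro suminf_nonneg) auto
  have t1: "(\<Sum>i. f (i + m)) \<le> 1 / 3^m"
  proof -
    have "(\<Sum>i. f (i + m)) \<le> (\<Sum>i. 2 / 3^(Suc (i + m)))"
      using sft geo_tail[of m] f2 by (intro suminf_le) (auto simp: sums_iff)
    also have "\<dots> = 1 / 3^m" using geo_tail[of m] by (simp add: sums_iff)
    finally show ?thesis .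
  qed
  have "xx y j = suminf f" unfolding xx_def f_def by simp
  then show ?thesis using split pre t0 t1 unfolding hh_def m_def by simp
qed

lemma all_in:
  assumes y: "0 \<le> y" "y \<le> 4"
  shows "y = (\<Sum>j<4. (xx y j)^2)"
proof (rule ccontr)
  assume ne: "y \<noteq> (\<Sum>j<4. (xx y j)^2)"
  define e where "e = \<bar>y - (\<Sum>j<4. (xx y j)^2)\<bar>"
  have e: "e > 0" using ne unfolding e_def by simp
  obtain n where n: "(8/9::real)^n < e/4" using real_arch_pow_inv[of "e/4" "8/9::real"] e by auto
  let ?s = "SS y n"
  have I: "(\<forall>j<4. 0 \<le> aa ?s j) \<and> loB ?s \<le> y \<and> y \<le> upB ?s \<and> sw ?s \<le> 4 * (8/9)^n"
    using SS_inv[OF y, of n] by blast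
  have lo: "loB ?s \<le> (\<Sum>j<4. (xx y j)^2)" unfolding loB_def
    using I xx_bounds[OF y, of n] by (intro sum_mono power_mono) auto
  have up: "(\<Sum>j<4. (xx y j)^2) \<le> upB ?s" unfolding upB_def
    using I xx_bounds[OF y, of n] by (intro sum_mono power_mono) (auto intro: order_trans)
  have w: "upB ?s - loB ?s = sw ?s" unfolding upB_def loB_def sw_def ww_def
    by (simp add: sum_subtractf[symmetric] power2_eq_square algebra_simps)
  have "e \<le> sw ?s" unfolding e_def using lo up w I by linarith
  then show False using I n by linarith
qed

lemma xx_cantor: assumes "0 \<le> y" "y \<le> 4" shows "xx y j \<in> cantor_set"
proof -
  define t where "t i = (if i = 0 then 0 else dg y j (i - 1))" for i
  have "\<forall>i. t i \<in> {0, 2}" unfolding t_def using dg_01[OF assms] by auto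
  moreover have "xx y j = (\<Sum>i. t (Suc i) / 3 ^ (Suc i))" unfolding t_def xx_def by simp
  ultimately show ?thesis unfolding cantor_set_def by blast
qed

theorem mainTheorem3:
  fixes k :: nat
  assumes "k \<ge> 2"
  shows "{36/81 + 8/9 * (1 / 3^(2*k)) + 1 / 3^(2*k) ..
          36/81 + 4 / 3^(2*k+1) + 1 / 3^(4*k) + 2 / 3^(2*k) + 4/9 * (1 / 3^(2*k)) :: real}
         \<subseteq> {y1 + y2 + y3 + y4 | y1 y2 y3 y4.
              y1 \<in> cantor_sq \<and> y2 \<in> cantor_sq \<and> y3 \<in> cantor_sq \<and> y4 \<in> cantor_sq}"
proof
  fix y :: real
  assume yin: "y \<in> {36/81 + 8/9 * (1 / 3^(2*k)) + 1 / 3^(2*k) ..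
          36/81 + 4 / 3^(2*k+1) + 1 / 3^(4*k) + 2 / 3^(2*k) + 4/9 * (1 / 3^(2*k)) :: real}"
  have q: "(1::real) \<le> 3 ^ n" for n by (rule one_le_power) simp
  have p1: "(1::real) / 3^(2*k) \<le> 1" "(4::real) / 3^(2*k+1) \<le> 4" "(1::real) / 3^(4*k) \<le> 1"
    using q[of "2*k"] q[of "4*k"] q[of "2*k+1"] by (simp_all add: field_simps)
  have p0: "(0::real) \<le> 1 / 3^(2*k)" by simp
  have y0: "0 \<le> y"
  proof -
    have "(0::real) \<le> 36/81 + 8/9 * (1 / 3^(2*k)) + 1 / 3^(2*k)" using p0 by simp
    then show ?thesis using yin by (simp only: atLeastAtMost_iff) linarith
  qed
  have y4: "y \<le> 4"
  proof -
    have "36/81 + 4 / 3^(2*k+1) + 1 / 3^(4*k) + 2 / 3^(2*k) + 4/9 * (1 / 3^(2*k)) \<le> (4::real)"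
    proof -
      have r: "(9::real) \<le> 3 ^ n" if "2 \<le> n" for n
        using power_increasing[OF that, of "3::real"] by simp
      have "2 / 3^(2*k) \<le> (2/9::real)" "1 / 3^(2*k) \<le> (1/9::real)"
        "4 / 3^(2*k+1) \<le> (4/9::real)" "1 / 3^(4*k) \<le> (1/9::real)"
        using r[of "2*k"] r[of "4*k"] r[of "2*k+1"] assms by (simp_all add: field_simps)
      then show ?thesis by linarith
    qed
    then show ?thesis using yin by (simp only: atLeastAtMost_iff) linarith
  qed
  have cs: "(xx y j)^2 \<in> cantor_sq" for j unfolding cantor_sq_def using xx_cantor[OF y0 y4] by blast
  have "y = (xx y 0)^2 + (xx y 1)^2 + (xx y 2)^2 + (xx y 3)^2"
    using all_in[OF y0 y4] by (simp add: eval_nat_numeral)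
  then show "y \<in> {y1 + y2 + y3 + y4 | y1 y2 y3 y4.
              y1 \<in> cantor_sq \<and> y2 \<in> cantor_sq \<and> y3 \<in> cantor_sq \<and> y4 \<in> cantor_sq}"
    using cs by blast
qed

end
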